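(* Let $A$ be a finite-dimensional Leibniz algebra over a field which is not nilpotent but all of whose proper subalgebras are nilpotent. Then $\dim(A/A^2)\le 1$.
   Context: A (left) Leibniz algebra is an algebra satisfying $x(yz)=(xy)z+y(xz)$ for all $x,y,z$. $A^2=AA$; nilpotent means $A^t=0$ for some $t$, where $A^1=A$, $A^{j+1}=AA^j$. *)

theory Defs
  imports Complex_Main
begin

text \<open>An algebra over a field 'k is modelled as the whole carrier type 'v, which is a
  'k-vector space via scale, together with a product m :: 'v \<Rightarrow> 'v \<Rightarrow> 'v.\<close>

definition bilinear_prod :: "('k::field \<Rightarrow> 'v::ab_group_add \<Rightarrow> 'v) \<Rightarrow> ('v \<Rightarrow> 'v \<Rightarrow> 'v) \<Rightarrow> bool" where
  "bilinear_prod scale m \<longleftrightarrow>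
     (\<forall>x y z. m (x + y) z = m x z + m y z) \<and>
     (\<forall>x y z. m x (y + z) = m x y + m x z) \<and>
     (\<forall>a x y. m (scale a x) y = scale a (m x y)) \<and>
     (\<forall>a x y. m x (scale a y) = scale a (m x y))"

definition leibniz_identity :: "('v::ab_group_add \<Rightarrow> 'v \<Rightarrow> 'v) \<Rightarrow> bool" where
  "leibniz_identity m \<longleftrightarrow> (\<forall>x y z. m x (m y z) = m (m x y) z + m y (m x z))"

definition leibniz_algebra :: "('k::field \<Rightarrow> 'v::ab_group_add \<Rightarrow> 'v) \<Rightarrow> ('v \<Rightarrow> 'v \<Rightarrow> 'v) \<Rightarrow> bool" where
  "leibniz_algebra scale m \<longleftrightarrow> vector_space scale \<and> bilinear_prod scale m \<and> leibniz_identity m"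

definition fin_dim :: "('k::field \<Rightarrow> 'v::ab_group_add \<Rightarrow> 'v) \<Rightarrow> bool" where
  "fin_dim scale \<longleftrightarrow> (\<exists>B. finite B \<and> module.span scale B = UNIV)"

definition set_prod :: "('k::field \<Rightarrow> 'v::ab_group_add \<Rightarrow> 'v) \<Rightarrow> ('v \<Rightarrow> 'v \<Rightarrow> 'v) \<Rightarrow> 'v set \<Rightarrow> 'v set \<Rightarrow> 'v set" where
  "set_prod scale m U V = module.span scale {m u v | u v. u \<in> U \<and> v \<in> V}"

text \<open>Powers S^1 = S, S^(j+1) = S S^j (S^0 is set to S as a harmless convention).\<close>
fun lpow :: "('k::field \<Rightarrow> 'v::ab_group_add \<Rightarrow> 'v) \<Rightarrow> ('v \<Rightarrow> 'v \<Rightarrow> 'v) \<Rightarrow> 'v set \<Rightarrow> nat \<Rightarrow> 'v set" where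
  "lpow scale m S 0 = S"
| "lpow scale m S (Suc 0) = S"
| "lpow scale m S (Suc (Suc j)) = set_prod scale m S (lpow scale m S (Suc j))"

definition nilpotent_alg :: "('k::field \<Rightarrow> 'v::ab_group_add \<Rightarrow> 'v) \<Rightarrow> ('v \<Rightarrow> 'v \<Rightarrow> 'v) \<Rightarrow> 'v set \<Rightarrow> bool" where
  "nilpotent_alg scale m S \<longleftrightarrow> (\<exists>t. lpow scale m S t = {0})"

definition subalgebra :: "('k::field \<Rightarrow> 'v::ab_group_add \<Rightarrow> 'v) \<Rightarrow> ('v \<Rightarrow> 'v \<Rightarrow> 'v) \<Rightarrow> 'v set \<Rightarrow> bool" where
  "subalgebra scale m S \<longleftrightarrow> module.subspace scale S \<and> (\<forall>x\<in>S. \<forall>y\<in>S. m x y \<in> S)"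

end

theory Submission
  imports Defs
begin

locale leib = vector_space scale for scale :: "'k::field \<Rightarrow> 'v::ab_group_add \<Rightarrow> 'v" +
  fixes m :: "'v \<Rightarrow> 'v \<Rightarrow> 'v"
  assumes addL: "m (x + y) z = m x z + m y z"
    and addR: "m x (y + z) = m x y + m x z"
    and scR: "m x (scale a y) = scale a (m x y)"
    and leib: "m x (m y z) = m (m x y) z + m y (m x z)"
begin

lemma m0R: "m x 0 = 0"
  using addR[of x 0 0] by simp

lemma lin_span:
  assumes "u \<in> span X" "\<And>w. w \<in> X \<Longrightarrow> m x w \<in> span Y"
  shows "m x u \<in> span Y"
  using assms(1)
proof (induction rule: span_induct_alt)
  case base
  then show ?case by (simp add: m0R span_zero)
next
  case (step c w y)
  then show ?case using assms(2)[of w]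
    by (simp add: addR scR span_add span_scale)
qed

definition Q :: "'v set \<Rightarrow> nat \<Rightarrow> 'v set" where
  "Q S k = span {foldr m ys w | ys w. set ys \<subseteq> S \<and> length ys = k}"

lemma Q_gen: "set ys \<subseteq> S \<Longrightarrow> foldr m ys w \<in> Q S (length ys)"
  unfolding Q_def by (rule span_base) blast

lemma Q0: "w \<in> Q S 0"
  using Q_gen[of "[]" S w] by simp

lemma Q_step:
  assumes "s \<in> S" "u \<in> Q S k"
  shows "m s u \<in> Q S (Suc k)"
proof -
  have "m s u \<in> span {foldr m ys w | ys w. set ys \<subseteq> S \<and> length ys = Suc k}"
    apply (rule lin_span[of u "{foldr m ys w | ys w. set ys \<subseteq> S \<and> length ys = k}"])
    using assms(2) apply (simp add: Q_def)
    apply (rule span_base)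
    using assms(1) apply clarsimp
    by (metis (mono_tags) foldr.simps(2) insert_subset length_Cons list.set(2) o_apply)
  then show ?thesis by (simp add: Q_def)
qed

lemma Q_M:
  assumes ideal: "\<And>x y. m x y \<in> S"
  shows "set ys \<subseteq> S \<Longrightarrow> m x (foldr m ys w) \<in> Q S (length ys)"
proof (induction ys)
  case Nil
  then show ?case by (simp add: Q0)
next
  case (Cons s ys)
  have "m x (foldr m (s # ys) w) = foldr m (m x s # ys) w + m s (m x (foldr m ys w))"
    using leib[of x s "foldr m ys w"] by simp
  moreover have "foldr m (m x s # ys) w \<in> Q S (length (s # ys))"
    using Q_gen[of "m x s # ys" S w] Cons.prems ideal by simp
  moreover have "m s (m x (foldr m ys w)) \<in> Q S (length (s # ys))"
    using Q_step Cons by simp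
  ultimately show ?case by (simp add: Q_def span_add)
qed

lemma Q_inv:
  assumes ideal: "\<And>x y. m x y \<in> S" and "u \<in> Q S k"
  shows "m x u \<in> Q S k"
proof -
  have "m x u \<in> span (Q S k)"
    apply (rule lin_span[of u "{foldr m ys w | ys w. set ys \<subseteq> S \<and> length ys = k}"])
    using assms(2) apply (simp add: Q_def)
    using Q_M[OF ideal] by (auto intro: span_base)
  then show ?thesis by (simp add: Q_def span_span)
qed

lemma comb:
  assumes i1: "\<And>x y. m x y \<in> S1" and i2: "\<And>x y. m x y \<in> S2"
    and sum: "\<And>x. \<exists>y z. y \<in> S1 \<and> z \<in> S2 \<and> x = y + z"
  shows "\<forall>k1 k2 v. k1 + k2 \<le> length xs \<longrightarrow> foldr m xs v \<in> span (Q S1 k1 \<union> Q S2 k2)"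
proof (induction xs)
  case Nil
  then show ?case by (auto intro: span_base Q0)
next
  case (Cons x rest)
  show ?case
  proof (intro allI impI)
    fix k1 k2 v assume len: "k1 + k2 \<le> length (x # rest)"
    let ?F = "foldr m rest v"
    let ?Z = "span (Q S1 k1 \<union> Q S2 k2)"
    obtain y z where yz: "y \<in> S1" "z \<in> S2" "x = y + z" using sum by blast
    have A: "m y ?F \<in> ?Z"
    proof (cases k1)
      case 0
      then show ?thesis by (auto intro: span_base Q0)
    next
      case (Suc j)
      have "?F \<in> span (Q S1 j \<union> Q S2 k2)" using Cons.IH len Suc by auto
      then show ?thesis
        apply (rule lin_span)
        using Q_step[OF yz(1)] Q_inv[OF i2] Suc by (auto intro: span_base)
    qed
    have B: "m z ?F \<in> ?Z"
    proof (cases k2)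
      case 0
      then show ?thesis by (auto intro: span_base Q0)
    next
      case (Suc j)
      have "?F \<in> span (Q S1 k1 \<union> Q S2 j)" using Cons.IH len Suc by auto
      then show ?thesis
        apply (rule lin_span)
        using Q_step[OF yz(2)] Q_inv[OF i1] Suc by (auto intro: span_base)
    qed
    show "foldr m (x # rest) v \<in> ?Z"
      using A B yz(3) by (simp add: addL span_add)
  qed
qed

lemma lpow_words:
  "lpow scale m UNIV (Suc n) \<subseteq> span {foldr m xs v | xs v. length xs = n}"
proof (induction n)
  case 0
  have "v \<in> span {foldr m xs v | xs v. length xs = 0}" for v
    by (rule span_base) (auto intro: exI[of _ "[]"])
  then show ?case by auto
next
  case (Suc n)
  have "{m x u | x u. x \<in> UNIV \<and> u \<in> lpow scale m UNIV (Suc n)}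
     \<subseteq> span {foldr m xs v | xs v. length xs = Suc n}"
  proof clarify
    fix x u assume "u \<in> lpow scale m UNIV (Suc n)"
    then have "u \<in> span {foldr m xs v | xs v. length xs = n}" using Suc by auto
    then show "m x u \<in> span {foldr m xs v | xs v. length xs = Suc n}"
      apply (rule lin_span)
      apply (rule span_base) apply clarsimp
      by (metis foldr.simps(2) length_Cons o_apply)
  qed
  then show ?case
    by (simp add: set_prod_def span_minimal)
qed

lemma word_lpow:
  "set ys \<subseteq> S \<Longrightarrow> u \<in> S \<Longrightarrow> foldr m ys u \<in> lpow scale m S (Suc (length ys))"
proof (induction ys)
  case Nil
  then show ?case by simp
next
  case (Cons s ys)
  then show ?case
    by (simp add: set_prod_def) (rule span_base, blast)
qed

lemma nil_Q:
  assumes ideal: "\<And>x y. m x y \<in> S" and nil: "nilpotent_alg scale m S"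
  shows "\<exists>K. Q S K = {0}"
proof -
  obtain t where t: "lpow scale m S t = {0}" using nil unfolding nilpotent_alg_def by blast
  obtain N where N: "lpow scale m S (Suc N) = {0}"
  proof (cases t)
    case 0
    then show ?thesis using that[of 0] t by simp
  next
    case (Suc j)
    then show ?thesis using that[of j] t by simp
  qed
  have "{foldr m ys w | ys w. set ys \<subseteq> S \<and> length ys = Suc N} \<subseteq> {0}"
  proof clarify
    fix ys w assume ys: "set ys \<subseteq> S" "length ys = Suc N"
    then obtain ys0 s where e: "ys = ys0 @ [s]"
      by (cases ys rule: rev_cases) auto
    have "foldr m ys w = foldr m ys0 (m s w)" using e by simp
    also have "\<dots> \<in> lpow scale m S (Suc N)"
      using word_lpow[of ys0 S "m s w"] ys e ideal by simp
    finally show "foldr m ys w = 0" using N by simp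
  qed
  then have "Q S (Suc N) \<subseteq> {0}" unfolding Q_def
    by (rule span_minimal) simp
  then show ?thesis using span_zero[of "{foldr m ys w | ys w. set ys \<subseteq> S \<and> length ys = Suc N}"]
    by (auto simp: Q_def)
qed

end

theorem mainTheorem6:
  fixes scale :: "'k::field \<Rightarrow> 'v::ab_group_add \<Rightarrow> 'v"
    and m :: "'v \<Rightarrow> 'v \<Rightarrow> 'v"
  assumes "leibniz_algebra scale m"
    and "fin_dim scale"
    and "\<not> nilpotent_alg scale m UNIV"
    and "\<forall>S. subalgebra scale m S \<and> S \<noteq> UNIV \<longrightarrow> nilpotent_alg scale m S"
  shows "vector_space.dim scale (UNIV :: 'v set)
           \<le> vector_space.dim scale (set_prod scale m UNIV UNIV) + 1"
proof (rule ccontr)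
  assume nle: "\<not> ?thesis"
  have vs: "vector_space scale" and bl: "bilinear_prod scale m" and li: "leibniz_identity m"
    using assms(1) unfolding leibniz_algebra_def by auto
  interpret leib scale m
    apply (rule leib.intro[OF vs])
    apply (rule leib_axioms.intro)
    using bl li unfolding bilinear_prod_def leibniz_identity_def by blast+
  define P where "P = set_prod scale m UNIV UNIV"
  have mP: "m x y \<in> P" for x y
    unfolding P_def set_prod_def by (rule span_base) blast
  obtain T where T: "finite T" "span T = UNIV" using assms(2) unfolding fin_dim_def by blast
  obtain BP where BP: "BP \<subseteq> P" "independent BP" "P \<subseteq> span BP" "card BP = dim P"
    using basis_exists by blast
  define B where "B = extend_basis BP"
  have BPB: "BP \<subseteq> B" and iB: "independent B" and sB: "span B = UNIV"
    using BP(2) unfolding B_def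
    by (auto simp: extend_basis_superset independent_extend_basis)
  have fB: "finite B" using independent_span_bound[OF T(1) iB] T(2) by auto
  have cB: "card B = dim (UNIV :: 'v set)" using dim_eq_card[of B UNIV] sB iB by simp
  have fBP: "finite BP" using fB BPB finite_subset by blast
  have "card (B - BP) = card B - card BP" using fBP BPB by (simp add: card_Diff_subset)
  then have "card (B - BP) \<ge> 2" using cB BP(4) nle P_def by simp
  then obtain a b where ab: "a \<in> B - BP" "b \<in> B - BP" "a \<noteq> b"
  proof -
    have "\<not> card (B - BP) \<le> 1" using \<open>card (B - BP) \<ge> 2\<close> by simp
    then show ?thesis using that card_le_Suc0_iff_eq[of "B - BP"] fB by auto
  qed
  define S1 where "S1 = span (B - {a})"
  define S2 where "S2 = span (B - {b})"
  have PS1: "P \<subseteq> S1" proof -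
    have "BP \<subseteq> B - {a}" using ab BPB by auto
    then have "span BP \<subseteq> S1" unfolding S1_def by (rule span_mono)
    then show ?thesis using BP(3) by blast
  qed
  have PS2: "P \<subseteq> S2" proof -
    have "BP \<subseteq> B - {b}" using ab BPB by auto
    then have "span BP \<subseteq> S2" unfolding S2_def by (rule span_mono)
    then show ?thesis using BP(3) by blast
  qed
  have i1: "m x y \<in> S1" for x y using mP PS1 by blast
  have i2: "m x y \<in> S2" for x y using mP PS2 by blast
  have n1: "S1 \<noteq> UNIV"
  proof
    assume "S1 = UNIV"
    then have "a \<in> span (B - {a})" unfolding S1_def by simp
    then show False using iB ab unfolding dependent_def by blast
  qed
  have n2: "S2 \<noteq> UNIV"
  proof
    assume "S2 = UNIV"
    then have "b \<in> span (B - {b})" unfolding S2_def by simp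
    then show False using iB ab unfolding dependent_def by blast
  qed
  have sa1: "subalgebra scale m S1" unfolding subalgebra_def using i1 S1_def by simp
  have sa2: "subalgebra scale m S2" unfolding subalgebra_def using i2 S2_def by simp
  obtain K1 where K1: "Q S1 K1 = {0}" using nil_Q[OF i1] assms(4) sa1 n1 by blast
  obtain K2 where K2: "Q S2 K2 = {0}" using nil_Q[OF i2] assms(4) sa2 n2 by blast
  have sum: "\<exists>y z. y \<in> S1 \<and> z \<in> S2 \<and> x = y + z" for x
  proof -
    have e: "(B - {a}) \<union> (B - {b}) = B" using ab by auto
    have "x \<in> span ((B - {a}) \<union> (B - {b}))" unfolding e sB by simp
    then have "x \<in> {y + z | y z. y \<in> S1 \<and> z \<in> S2}" unfolding S1_def S2_def by (simp only: span_Un)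
    then show ?thesis by blast
  qed
  have "{foldr m xs v | xs v. length xs = K1 + K2} \<subseteq> {0}"
  proof clarify
    fix xs :: "'v list" and v assume "length xs = K1 + K2"
    then have "foldr m xs v \<in> span (Q S1 K1 \<union> Q S2 K2)"
      using comb[OF i1 i2 sum, of xs] by auto
    then show "foldr m xs v = 0" using K1 K2 by simp
  qed
  then have "span {foldr m xs v | xs v. length xs = K1 + K2} \<subseteq> {0}"
    by (rule span_minimal) simp
  then have sub: "lpow scale m UNIV (Suc (K1 + K2)) \<subseteq> {0}" using lpow_words by blast
  have "0 \<in> lpow scale m UNIV (Suc (K1 + K2))"
    by (cases "K1 + K2") (auto simp: set_prod_def span_zero)
  then have "lpow scale m UNIV (Suc (K1 + K2)) = {0}" using sub by blast
  then show False using assms(3) unfolding nilpotent_alg_def by blast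
qed

end
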